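(* Let $p/q$ be an even rational parameter and let $\rho(x,y)=(x,-y)$. Then the set of light points is invariant under $\rho$. More precisely: a point $z$ is a light point of type $\mathcal P$ (resp. $\mathcal Q$) on a horizontal unit segment if and only if $\rho(z)$ is a light point of type $\mathcal P$ (resp. $\mathcal Q$) on a horizontal unit segment; and $z$ is a light point of type $\mathcal P$ on a vertical unit segment if and only if $\rho(z)$ is a light point of type $\mathcal Q$ on a vertical unit segment.
   Context: An even rational parameter is a rational $p/q\in(0,1)$, $p,q$ positive coprime integers, with $pq$ even. Put $\omega=p+q$, $P=2p/\omega$, $Q=2q/\omega$. Families of lines: $\mathcal H$ = lines $y=n$, $\mathcal V$ = lines $x=n$ ($n\in\mathbb Z$), $\mathcal P$ = lines of slope $-P$ with integer $y$-intercept, $\mathcal Q$ = lines of slope $-Q$ with integer $y$-intercept. Functions mod $2\mathbb Z$, with values represented in $(-1,1]$: $F_H(x,y)=2Py$, $F_V(x,y)=2Px$, $F_P(x,y)=Py+P^2x+1$, $F_Q(x,y)=Py+PQx+1$. A unit segment is an edge of a unit square of the integer grid; horizontal ones lie on lines of $\mathcal H$ (set $A=H$), vertical ones on lines of $\mathcal V$ (set $A=V$). For $B\in\{P,Q\}$, a point $z$ of a unit segment is a light point of type $\mathcal B$ on that segment if $z$ lies on a line of the family $\mathcal B$ and $F_A(z)F_B(z)>0$ and $|F_B(z)|<|F_A(z)|$. *)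

theory Defs
  imports Complex_Main
begin

definition even_rational_parameter :: "int \<Rightarrow> int \<Rightarrow> bool" where
  "even_rational_parameter p q \<longleftrightarrow> 0 < p \<and> 0 < q \<and> p < q \<and> coprime p q \<and> even (p * q)"

definition omega :: "int \<Rightarrow> int \<Rightarrow> real" where
  "omega p q = real_of_int (p + q)"

definition PP :: "int \<Rightarrow> int \<Rightarrow> real" where
  "PP p q = 2 * real_of_int p / omega p q"

definition QQ :: "int \<Rightarrow> int \<Rightarrow> real" where
  "QQ p q = 2 * real_of_int q / omega p q"

text \<open>Representative of a real number modulo 2Z in the interval (-1,1].\<close>
definition red2 :: "real \<Rightarrow> real" where
  "red2 t = t - 2 * real_of_int \<lceil>(t - 1) / 2\<rceil>"

datatype family = FamH | FamV | FamP | FamQ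

fun on_family :: "int \<Rightarrow> int \<Rightarrow> family \<Rightarrow> real \<times> real \<Rightarrow> bool" where
  "on_family p q FamH (x, y) \<longleftrightarrow> (\<exists>n::int. y = real_of_int n)"
| "on_family p q FamV (x, y) \<longleftrightarrow> (\<exists>n::int. x = real_of_int n)"
| "on_family p q FamP (x, y) \<longleftrightarrow> (\<exists>n::int. y = - PP p q * x + real_of_int n)"
| "on_family p q FamQ (x, y) \<longleftrightarrow> (\<exists>n::int. y = - QQ p q * x + real_of_int n)"

fun FF :: "int \<Rightarrow> int \<Rightarrow> family \<Rightarrow> real \<times> real \<Rightarrow> real" where
  "FF p q FamH (x, y) = red2 (2 * PP p q * y)"
| "FF p q FamV (x, y) = red2 (2 * PP p q * x)"
| "FF p q FamP (x, y) = red2 (PP p q * y + (PP p q)^2 * x + 1)"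
| "FF p q FamQ (x, y) = red2 (PP p q * y + PP p q * QQ p q * x + 1)"

definition hseg :: "int \<Rightarrow> int \<Rightarrow> (real \<times> real) set" where
  "hseg m n = {(x, real_of_int n) | x. real_of_int m \<le> x \<and> x \<le> real_of_int m + 1}"

definition vseg :: "int \<Rightarrow> int \<Rightarrow> (real \<times> real) set" where
  "vseg m n = {(real_of_int m, y) | y. real_of_int n \<le> y \<and> y \<le> real_of_int n + 1}"

definition horizontal_segments :: "(real \<times> real) set set" where
  "horizontal_segments = {hseg m n | m n. True}"

definition vertical_segments :: "(real \<times> real) set set" where
  "vertical_segments = {vseg m n | m n. True}"

definition light_point :: "int \<Rightarrow> int \<Rightarrow> family \<Rightarrow> family \<Rightarrow> (real \<times> real) set \<Rightarrow> real \<times> real \<Rightarrow> bool" where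
  "light_point p q A B S z \<longleftrightarrow> z \<in> S \<and> on_family p q B z \<and>
     FF p q A z * FF p q B z > 0 \<and> \<bar>FF p q B z\<bar> < \<bar>FF p q A z\<bar>"

definition light_on_horizontal :: "int \<Rightarrow> int \<Rightarrow> family \<Rightarrow> real \<times> real \<Rightarrow> bool" where
  "light_on_horizontal p q B z \<longleftrightarrow> (\<exists>S\<in>horizontal_segments. light_point p q FamH B S z)"

definition light_on_vertical :: "int \<Rightarrow> int \<Rightarrow> family \<Rightarrow> real \<times> real \<Rightarrow> bool" where
  "light_on_vertical p q B z \<longleftrightarrow> (\<exists>S\<in>vertical_segments. light_point p q FamV B S z)"

definition rho :: "real \<times> real \<Rightarrow> real \<times> real" where
  "rho z = (fst z, - snd z)"

end

theory Submission
  imports Defs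
begin

lemma red2_shift: "red2 t = t - 2 * real_of_int \<lceil>(t - 1) / 2\<rceil>"
  by (simp add: red2_def)

lemma red2_range: "-1 < red2 t \<and> red2 t \<le> 1"
proof -
  define c where "c = real_of_int \<lceil>(t - 1) / 2\<rceil>"
  have a: "c - 1 < (t - 1) / 2" "(t - 1) / 2 \<le> c" using ceiling_correct[of "(t - 1) / 2"] by (auto simp: c_def)
  have "red2 t = t - 2 * c" by (simp add: red2_def c_def)
  thus ?thesis using a by (simp add: field_simps)
qed

lemma red2_id: "-1 < t \<Longrightarrow> t \<le> 1 \<Longrightarrow> red2 t = t"
proof -
  assume h: "-1 < t" "t \<le> 1"
  have "\<lceil>(t - 1) / 2\<rceil> = 0"
    using h by (simp add: ceiling_eq_iff)
  thus ?thesis by (simp add: red2_def)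
qed

lemma red2_per: "red2 (t + 2 * real_of_int k) = red2 t"
proof -
  have e: "(t + 2 * real_of_int k - 1) / 2 = (t - 1) / 2 + real_of_int k" by (simp add: field_simps)
  have "\<lceil>(t + 2 * real_of_int k - 1) / 2\<rceil> = \<lceil>(t - 1) / 2\<rceil> + k" by (subst e) (rule ceiling_add_of_int)
  thus ?thesis by (simp add: red2_def)
qed

lemma red2_eq: "\<exists>k::int. t = red2 t + 2 * real_of_int k"
  by (rule exI[of _ "\<lceil>(t - 1) / 2\<rceil>"]) (simp add: red2_def)

definition Lh :: "real \<Rightarrow> real \<Rightarrow> bool" where
  "Lh u v \<longleftrightarrow> u * v > 0 \<and> \<bar>v\<bar> < \<bar>u\<bar>"

lemma red2_lin1: "red2 (a * U + b * V) = red2 (a * red2 U + b * red2 V)"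
  if ai: "a \<in> \<int>" and bi: "b \<in> \<int>" for a b U V :: real
proof -
  obtain k where k: "U = red2 U + 2 * real_of_int k" using red2_eq by blast
  obtain l where l: "V = red2 V + 2 * real_of_int l" using red2_eq by blast
  obtain i where i: "a = real_of_int i" using Ints_cases[OF ai] by blast
  obtain j where j: "b = real_of_int j" using Ints_cases[OF bi] by blast
  define u where "u = red2 U"
  define v where "v = red2 V"
  have k': "U = u + 2 * real_of_int k" using k u_def by simp
  have l': "V = v + 2 * real_of_int l" using l v_def by simp
  have "a * U + b * V = (a * u + b * v) + 2 * real_of_int (i*k + j*l)"
    unfolding k' l' i j by (simp add: algebra_simps)
  hence "red2 (a * U + b * V) = red2 ((a * u + b * v) + 2 * real_of_int (i*k + j*l))" by simp
  also have "\<dots> = red2 (a * u + b * v)" by (rule red2_per)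
  finally show ?thesis by (simp add: u_def v_def)
qed

lemma lemA:
  assumes "red2 U \<noteq> 1" "Lh (red2 U) (red2 V)"
  shows "Lh (red2 (- U)) (red2 (V - U))"
proof -
  define u where "u = red2 U"
  define v where "v = red2 V"
  have r1: "red2 (- U) = red2 (- u)"
    using red2_lin1[of "-1" 0 U U] by (simp add: u_def)
  have r2: "red2 (V - U) = red2 (v - u)"
    using red2_lin1[of "-1" 1 U V] by (simp add: u_def v_def)
  have ur: "-1 < u" "u < 1" using red2_range[of U] assms(1) u_def by auto
  have vr: "-1 < v" "v \<le> 1" using red2_range[of V] v_def by auto
  have L: "u * v > 0" "\<bar>v\<bar> < \<bar>u\<bar>" using assms(2) by (auto simp: Lh_def u_def v_def)
  show ?thesis
  proof (cases "u > 0")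
    case True
    hence "v > 0" using L(1) by (simp add: zero_less_mult_iff)
    hence "v < u" using L(2) True by simp
    have "red2 (-u) = -u" using ur True by (intro red2_id) auto
    moreover have "red2 (v - u) = v - u" using ur vr True \<open>v > 0\<close> \<open>v < u\<close> by (intro red2_id) auto
    moreover have "u * (v - u) < 0" using True \<open>v < u\<close> by (simp add: mult_pos_neg)
    ultimately show ?thesis using True \<open>v > 0\<close> \<open>v < u\<close> r1 r2
      by (auto simp: Lh_def)
  next
    case False
    hence uneg: "u < 0" using L(1) by (cases "u = 0") auto
    hence "v < 0" using L(1) by (simp add: zero_less_mult_iff)
    hence "u < v" using L(2) uneg by simp
    have "red2 (-u) = -u" using ur uneg by (intro red2_id) auto
    moreover have "red2 (v - u) = v - u" using ur vr uneg \<open>v < 0\<close> \<open>u < v\<close> by (intro red2_id) auto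
    moreover have "u * (v - u) < 0" using uneg \<open>u < v\<close> by (simp add: mult_neg_pos)
    ultimately show ?thesis using uneg \<open>v < 0\<close> \<open>u < v\<close> r1 r2
      by (auto simp: Lh_def)
  qed
qed

lemma lemB:
  assumes "Lh (red2 U) (red2 V)"
  shows "Lh (red2 U) (red2 (U + 2 - V))"
proof -
  define u where "u = red2 U"
  define v where "v = red2 V"
  have r2: "red2 (U + 2 - V) = red2 (u - v)"
  proof -
    have "red2 (U + 2 - V) = red2 (U - V)" using red2_per[of "U - V" 1] by (simp add: algebra_simps)
    also have "\<dots> = red2 (u - v)" using red2_lin1[of 1 "-1" U V] by (simp add: u_def v_def)
    finally show ?thesis .
  qed
  have ur: "-1 < u" "u \<le> 1" using red2_range[of U] u_def by auto
  have vr: "-1 < v" "v \<le> 1" using red2_range[of V] v_def by auto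
  have L: "u * v > 0" "\<bar>v\<bar> < \<bar>u\<bar>" using assms by (auto simp: Lh_def u_def v_def)
  show ?thesis
  proof (cases "u > 0")
    case True
    hence "v > 0" using L(1) by (simp add: zero_less_mult_iff)
    hence "v < u" using L(2) True by simp
    have "red2 (u - v) = u - v" using ur vr True \<open>v > 0\<close> \<open>v < u\<close> by (intro red2_id) auto
    thus ?thesis using True \<open>v > 0\<close> \<open>v < u\<close> r2
      by (auto simp: Lh_def u_def[symmetric])
  next
    case False
    hence uneg: "u < 0" using L(1) by (cases "u = 0") auto
    hence "v < 0" using L(1) by (simp add: zero_less_mult_iff)
    hence "u < v" using L(2) uneg by simp
    have "red2 (u - v) = u - v" using ur vr uneg \<open>v < 0\<close> \<open>u < v\<close> by (intro red2_id) auto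
    thus ?thesis using uneg \<open>v < 0\<close> \<open>u < v\<close> r2
      by (auto simp: Lh_def u_def[symmetric] mult_neg_neg)
  qed
qed


lemma erp_odd: "even_rational_parameter p q \<Longrightarrow> odd (p + q)"
proof
  assume e: "even_rational_parameter p q" and o: "even (p + q)"
  have "even p \<or> even q" using e by (auto simp: even_rational_parameter_def)
  hence "even p \<and> even q" using o by auto
  hence "2 dvd gcd p q" by auto
  moreover have "gcd p q = 1" using e by (auto simp: even_rational_parameter_def)
  ultimately show False by simp
qed

lemma PQ_sum: "even_rational_parameter p q \<Longrightarrow> PP p q + QQ p q = 2"
proof -
  assume e: "even_rational_parameter p q"
  hence "real_of_int (p + q) > 0" by (auto simp: even_rational_parameter_def)
  hence "(2 * real_of_int p + 2 * real_of_int q) / (real_of_int p + real_of_int q) = 2"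
    by (simp add: field_simps)
  thus ?thesis by (simp add: PP_def QQ_def omega_def add_divide_distrib[symmetric])
qed

lemma not_one: "even_rational_parameter p q \<Longrightarrow> red2 (2 * PP p q * real_of_int n) \<noteq> 1"
proof
  assume e: "even_rational_parameter p q" and r: "red2 (2 * PP p q * real_of_int n) = 1"
  define w where "w = real_of_int (p + q)"
  have pos: "w > 0" using e by (auto simp: even_rational_parameter_def w_def)
  obtain k where k: "2 * PP p q * real_of_int n = red2 (2 * PP p q * real_of_int n) + 2 * real_of_int k"
    using red2_eq by blast
  have P: "PP p q = 2 * real_of_int p / w" by (simp add: PP_def omega_def w_def)
  have "2 * (2 * real_of_int p / w) * real_of_int n = 1 + 2 * real_of_int k"
    using k r P by simp
  hence "2 * (2 * real_of_int p) * real_of_int n = (1 + 2 * real_of_int k) * w"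
    using pos by (simp add: field_simps)
  hence "real_of_int (4 * p * n) = real_of_int ((1 + 2 * k) * (p + q))" by (simp add: w_def)
  hence i: "4 * p * n = (1 + 2 * k) * (p + q)" by (simp only: of_int_eq_iff)
  have "even (4 * p * n)" by simp
  moreover have "odd ((1 + 2 * k) * (p + q))" using erp_odd[OF e] by simp
  ultimately show False using i by metis
qed

lemma famdata:
  assumes "B = FamP \<or> B = FamQ"
  shows "\<exists>C D. (\<forall>x y. FF p q B (x, y) = red2 (PP p q * y + C * x + 1) \<and>
      (on_family p q B (x, y) \<longleftrightarrow> (\<exists>n::int. y = - D * x + real_of_int n)))"
proof (cases B)
  case FamP thus ?thesis
    by (intro exI[of _ "(PP p q)^2"] exI[of _ "PP p q"]) (simp add: power2_eq_square)
next
  case FamQ thus ?thesis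
    by (intro exI[of _ "PP p q * QQ p q"] exI[of _ "QQ p q"]) simp
qed (use assms in auto)

lemma horiz:
  assumes e: "even_rational_parameter p q" and B: "B = FamP \<or> B = FamQ"
    and L: "light_on_horizontal p q B z"
  shows "light_on_horizontal p q B (rho z)"
proof -
  obtain C D where CD: "\<And>x y. FF p q B (x, y) = red2 (PP p q * y + C * x + 1)"
    "\<And>x y. on_family p q B (x, y) \<longleftrightarrow> (\<exists>n::int. y = - D * x + real_of_int n)"
    using famdata[OF B] by blast
  obtain S where S: "S \<in> horizontal_segments" "light_point p q FamH B S z"
    using L by (auto simp: light_on_horizontal_def)
  obtain m n where Sm: "S = hseg m n" using S(1) by (auto simp: horizontal_segments_def)
  obtain x where z: "z = (x, real_of_int n)" "real_of_int m \<le> x" "x \<le> real_of_int m + 1"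
    using S(2) Sm by (auto simp: light_point_def hseg_def)
  obtain k :: int where k: "real_of_int n = - D * x + real_of_int k"
    using S(2) z CD(2) by (auto simp: light_point_def)
  define U where "U = 2 * PP p q * real_of_int n"
  define V where "V = PP p q * real_of_int n + C * x + 1"
  have "Lh (red2 U) (red2 V)"
    using S(2) z by (auto simp: light_point_def Lh_def U_def V_def CD(1))
  hence LL: "Lh (red2 (- U)) (red2 (V - U))" using lemA not_one[OF e] U_def by blast
  have rz: "rho z = (x, real_of_int (- n))" using z by (simp add: rho_def)
  have "hseg m (- n) \<in> horizontal_segments" by (auto simp: horizontal_segments_def)
  moreover have "rho z \<in> hseg m (- n)" using rz z by (auto simp: hseg_def)
  moreover have "on_family p q B (rho z)"
    unfolding rz CD(2) by (rule exI[of _ "k - 2 * n"]) (simp add: k algebra_simps)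
  moreover have "FF p q FamH (rho z) = red2 (- U)" by (simp add: rz U_def)
  moreover have "FF p q B (rho z) = red2 (V - U)" by (simp add: rz U_def V_def CD(1) algebra_simps)
  ultimately show ?thesis using LL
    by (auto simp: light_on_horizontal_def light_point_def Lh_def)
qed

lemma vert:
  assumes e: "even_rational_parameter p q"
    and B: "(B1 = FamP \<and> B2 = FamQ) \<or> (B1 = FamQ \<and> B2 = FamP)"
    and L: "light_on_vertical p q B1 z"
  shows "light_on_vertical p q B2 (rho z)"
proof -
  have PQ: "PP p q + QQ p q = 2" using PQ_sum[OF e] .
  obtain C1 D1 C2 D2 where CD: "\<And>x y. FF p q B1 (x, y) = red2 (PP p q * y + C1 * x + 1)"
    "\<And>x y. on_family p q B1 (x, y) \<longleftrightarrow> (\<exists>n::int. y = - D1 * x + real_of_int n)"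
    "\<And>x y. FF p q B2 (x, y) = red2 (PP p q * y + C2 * x + 1)"
    "\<And>x y. on_family p q B2 (x, y) \<longleftrightarrow> (\<exists>n::int. y = - D2 * x + real_of_int n)"
    and sums: "C1 + C2 = 2 * PP p q" "D1 + D2 = 2"
  proof -
    show ?thesis
    proof (cases "B1 = FamP")
      case True
      hence "B2 = FamQ" using B by auto
      thus ?thesis using that[of "(PP p q)^2" "PP p q" "PP p q * QQ p q" "QQ p q"] True PQ
        by (simp add: power2_eq_square algebra_simps flip: distrib_left)
    next
      case False
      hence "B1 = FamQ" "B2 = FamP" using B by auto
      thus ?thesis using that[of "PP p q * QQ p q" "QQ p q" "(PP p q)^2" "PP p q"] PQ
        by (simp add: power2_eq_square algebra_simps flip: distrib_left)
    qed
  qed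
  obtain S where S: "S \<in> vertical_segments" "light_point p q FamV B1 S z"
    using L by (auto simp: light_on_vertical_def)
  obtain m n where Sm: "S = vseg m n" using S(1) by (auto simp: vertical_segments_def)
  obtain y where z: "z = (real_of_int m, y)" "real_of_int n \<le> y" "y \<le> real_of_int n + 1"
    using S(2) Sm by (auto simp: light_point_def vseg_def)
  obtain k :: int where k: "y = - D1 * real_of_int m + real_of_int k"
    using S(2) z CD(2) by (auto simp: light_point_def)
  define U where "U = 2 * PP p q * real_of_int m"
  define V where "V = PP p q * y + C1 * real_of_int m + 1"
  have "Lh (red2 U) (red2 V)"
    using S(2) z by (auto simp: light_point_def Lh_def U_def V_def CD(1))
  hence LL: "Lh (red2 U) (red2 (U + 2 - V))" using lemB by blast
  have rz: "rho z = (real_of_int m, - y)" using z by (simp add: rho_def)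
  have "vseg m (- n - 1) \<in> vertical_segments" by (auto simp: vertical_segments_def)
  moreover have "rho z \<in> vseg m (- n - 1)" using rz z by (auto simp: vseg_def)
  moreover have "on_family p q B2 (rho z)"
  proof -
    have "D2 = 2 - D1" using sums(2) by simp
    hence "- y = - D2 * real_of_int m + real_of_int (2 * m - k)" by (simp add: k left_diff_distrib)
    thus ?thesis unfolding rz CD(4) by blast
  qed
  moreover have "FF p q FamV (rho z) = red2 U" by (simp add: rz U_def)
  moreover have "FF p q B2 (rho z) = red2 (U + 2 - V)"
  proof -
    have c2: "C2 = 2 * PP p q - C1" using sums(1) by simp
    have eq: "PP p q * (- y) + C2 * real_of_int m + 1 = U + 2 - V"
      unfolding c2 U_def V_def by (simp add: algebra_simps)
    have "FF p q B2 (rho z) = red2 (PP p q * (- y) + C2 * real_of_int m + 1)"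
      unfolding rz by (rule CD(3))
    thus ?thesis unfolding eq .
  qed
  ultimately show ?thesis using LL
    by (auto simp: light_on_vertical_def light_point_def Lh_def)
qed

lemma rho_rho: "rho (rho z) = z" by (simp add: rho_def)

theorem lemma2p3:
  fixes p q :: int and z :: "real \<times> real"
  assumes "even_rational_parameter p q"
  shows "(light_on_horizontal p q FamP z \<longleftrightarrow> light_on_horizontal p q FamP (rho z))
       \<and> (light_on_horizontal p q FamQ z \<longleftrightarrow> light_on_horizontal p q FamQ (rho z))
       \<and> (light_on_vertical p q FamP z \<longleftrightarrow> light_on_vertical p q FamQ (rho z))"
proof (intro conjI iffI)
  show "light_on_horizontal p q FamP (rho z)" if "light_on_horizontal p q FamP z"
    using horiz[OF assms _ that] by simp
  show "light_on_horizontal p q FamP z" if "light_on_horizontal p q FamP (rho z)"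
    using horiz[OF assms _ that] unfolding rho_rho by simp
  show "light_on_horizontal p q FamQ (rho z)" if "light_on_horizontal p q FamQ z"
    using horiz[OF assms _ that] by simp
  show "light_on_horizontal p q FamQ z" if "light_on_horizontal p q FamQ (rho z)"
    using horiz[OF assms _ that] unfolding rho_rho by simp
  show "light_on_vertical p q FamQ (rho z)" if "light_on_vertical p q FamP z"
    using vert[OF assms _ that] by simp
  show "light_on_vertical p q FamP z" if "light_on_vertical p q FamQ (rho z)"
    using vert[OF assms _ that] unfolding rho_rho by simp
qed

end
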